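(* Let $\alpha$ be a set and $\odot:\alpha\times\alpha\to\alpha$. Calls $\mathrm{treeReduce}(\odot,\mathit{rdd})$ have deterministic outcomes if and only if calls $\mathrm{reduce}(\odot,\mathit{rdd})$ have deterministic outcomes.
   Context: Lists are finite; $\mathbin{+\!\!+}$ is concatenation. $\mathrm{foldl}(f,b,[\,])=b$, $\mathrm{foldl}(f,b,[x_1,\dots,x_n])=f(\cdots f(f(b,x_1),x_2)\cdots,x_n)$; $\mathrm{reducel}(f,[x_1,\dots,x_n])=\mathrm{foldl}(f,x_1,[x_2,\dots,x_n])$ for nonempty lists. An RDD is a list of lists. A partitioning is a function $P$ sending each nonempty list $L$ to an RDD obtained by splitting $L$ into consecutive nonempty pieces $p_1,\dots,p_n$ with $p_1\mathbin{+\!\!+}\cdots\mathbin{+\!\!+}p_n=L$ and then arbitrarily permuting $[p_1,\dots,p_n]$. $\mathrm{reduce}_{\mathrm{det}}(\odot,[q_1,\dots,q_m])=\mathrm{reducel}(\odot,[\mathrm{reducel}(\odot,q_1),\dots,\mathrm{reducel}(\odot,q_m)])$; calls to $\mathrm{reduce}$ have deterministic outcomes if $\mathrm{reduce}_{\mathrm{det}}(\odot,P(L))=\mathrm{reducel}(\odot,L)$ for all nonempty $L$ and all partitionings $P$. An instantiation of $\mathrm{apply}$ is any deterministic procedure which, given $\odot$ and a nonempty list $[r_1,\dots,r_m]$, returns the value obtained by repeatedly replacing two adjacent elements $l',r'$ of the current list by $l'\odot r'$ until one element remains. $\mathrm{treeReduce}_{\mathrm{bt}}(\mathrm{apply},\odot,[q_1,\dots,q_m])=\mathrm{apply}(\odot,[\mathrm{reducel}(\odot,q_1),\dots,\mathrm{reducel}(\odot,q_m)])$.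 Calls $\mathrm{treeReduce}(\odot,\mathit{rdd})$ have deterministic outcomes if $\mathrm{treeReduce}_{\mathrm{bt}}(\mathrm{apply},\odot,P(L))=\mathrm{reducel}(\odot,L)$ for all nonempty lists $L$, partitionings $P$, and instantiations $\mathrm{apply}$. *)

theory Defs
  imports "HOL-Library.Multiset"
begin

fun reducel :: "('a \<Rightarrow> 'a \<Rightarrow> 'a) \<Rightarrow> 'a list \<Rightarrow> 'a" where
  "reducel f (x # xs) = foldl f x xs"
| "reducel f [] = undefined"

text \<open>A partitioning: sends every nonempty list L to a permutation of a split of L
  into consecutive nonempty pieces.\<close>
definition is_partitioning :: "('a list \<Rightarrow> 'a list list) \<Rightarrow> bool" where
  "is_partitioning P \<longleftrightarrow>
     (\<forall>L. L \<noteq> [] \<longrightarrow>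
        (\<exists>ps. (\<forall>p\<in>set ps. p \<noteq> []) \<and> concat ps = L \<and> mset (P L) = mset ps))"

definition reduce_det :: "('a \<Rightarrow> 'a \<Rightarrow> 'a) \<Rightarrow> 'a list list \<Rightarrow> 'a" where
  "reduce_det f qs = reducel f (map (reducel f) qs)"

definition reduce_deterministic :: "('a \<Rightarrow> 'a \<Rightarrow> 'a) \<Rightarrow> bool" where
  "reduce_deterministic f \<longleftrightarrow>
     (\<forall>P L. is_partitioning P \<longrightarrow> L \<noteq> [] \<longrightarrow> reduce_det f (P L) = reducel f L)"

inductive combines :: "('a \<Rightarrow> 'a \<Rightarrow> 'a) \<Rightarrow> 'a list \<Rightarrow> 'a \<Rightarrow> bool" for f where
  single: "combines f [x] x"
| step: "combines f (ys @ f l r # zs) v \<Longrightarrow> combines f (ys @ l # r # zs) v"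

text \<open>An instantiation of apply: a (deterministic) function which on every operator and
  every nonempty list returns a value obtainable by adjacent combination.\<close>
definition is_apply :: "(('a \<Rightarrow> 'a \<Rightarrow> 'a) \<Rightarrow> 'a list \<Rightarrow> 'a) \<Rightarrow> bool" where
  "is_apply app \<longleftrightarrow> (\<forall>f xs. xs \<noteq> [] \<longrightarrow> combines f xs (app f xs))"

definition treeReduce_bt ::
  "(('a \<Rightarrow> 'a \<Rightarrow> 'a) \<Rightarrow> 'a list \<Rightarrow> 'a) \<Rightarrow> ('a \<Rightarrow> 'a \<Rightarrow> 'a) \<Rightarrow> 'a list list \<Rightarrow> 'a" where
  "treeReduce_bt app f qs = app f (map (reducel f) qs)"

definition treeReduce_deterministic :: "('a \<Rightarrow> 'a \<Rightarrow> 'a) \<Rightarrow> bool" where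
  "treeReduce_deterministic f \<longleftrightarrow>
     (\<forall>app P L. is_apply app \<longrightarrow> is_partitioning P \<longrightarrow> L \<noteq> [] \<longrightarrow>
        treeReduce_bt app f (P L) = reducel f L)"

end

theory Submission
  imports Defs
begin

lemma combines_reducel: "combines f (x # zs) (foldl f x zs)"
proof (induction zs arbitrary: x)
  case Nil then show ?case by (simp add: combines.single)
next
  case (Cons y zs)
  have "combines f ([] @ f x y # zs) (foldl f (f x y) zs)" using Cons by simp
  then have "combines f ([] @ x # y # zs) (foldl f (f x y) zs)" by (rule combines.step)
  then show ?case by simp
qed

lemma is_apply_reducel: "is_apply reducel"
  unfolding is_apply_def
proof (intro allI impI)
  fix f :: "'a \<Rightarrow> 'a \<Rightarrow> 'a" and xs :: "'a list"
  assume "xs \<noteq> []"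
  then obtain x zs where "xs = x # zs" by (cases xs) auto
  then show "combines f xs (reducel f xs)" by (simp add: combines_reducel)
qed

lemma reducel_step:
  assumes A: "\<And>x y z. f (f x y) z = f x (f y z)"
  shows "reducel f (ys @ f l r # zs) = reducel f (ys @ l # r # zs)"
proof (cases ys)
  case Nil then show ?thesis by simp
next
  case (Cons y ys') then show ?thesis by (simp add: A)
qed

lemma combines_eq:
  assumes A: "\<And>x y z. f (f x y) z = f x (f y z)"
  shows "combines f xs v \<Longrightarrow> v = reducel f xs"
proof (induction rule: combines.induct)
  case (single x) then show ?case by simp
next
  case (step ys l r zs v) then show ?case using reducel_step[OF A] by simp
qed

theorem proposition2:
  fixes f :: "'a \<Rightarrow> 'a \<Rightarrow> 'a"
  shows "treeReduce_deterministic f \<longleftrightarrow> reduce_deterministic f"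
proof
  assume "treeReduce_deterministic f"
  then show "reduce_deterministic f"
    using is_apply_reducel
    unfolding treeReduce_deterministic_def reduce_deterministic_def
      treeReduce_bt_def reduce_det_def by blast
next
  assume R: "reduce_deterministic f"
  have comm: "f a b = f b a" for a b
  proof -
    define P where "P = (\<lambda>L. if L = [a,b] then [[b],[a]] else [L])"
    have "is_partitioning P"
      unfolding is_partitioning_def
    proof (intro allI impI)
      fix L :: "'a list" assume "L \<noteq> []"
      show "\<exists>ps. (\<forall>p\<in>set ps. p \<noteq> []) \<and> concat ps = L \<and> mset (P L) = mset ps"
      proof (cases "L = [a,b]")
        case True then show ?thesis by (intro exI[of _ "[[a],[b]]"]) (simp add: P_def)
      next
        case False then show ?thesis using \<open>L \<noteq> []\<close>
          by (intro exI[of _ "[L]"]) (simp add: P_def)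
      qed
    qed
    then have "reduce_det f (P [a,b]) = reducel f [a,b]"
      using R unfolding reduce_deterministic_def by blast
    then show ?thesis by (simp add: P_def reduce_det_def)
  qed
  have assoc: "f (f a b) c = f a (f b c)" for a b c
  proof -
    define P where "P = (\<lambda>L. if L = [a,b,c] then [[b,c],[a]] else [L])"
    have "is_partitioning P"
      unfolding is_partitioning_def
    proof (intro allI impI)
      fix L :: "'a list" assume "L \<noteq> []"
      show "\<exists>ps. (\<forall>p\<in>set ps. p \<noteq> []) \<and> concat ps = L \<and> mset (P L) = mset ps"
      proof (cases "L = [a,b,c]")
        case True then show ?thesis by (intro exI[of _ "[[a],[b,c]]"]) (simp add: P_def)
      next
        case False then show ?thesis using \<open>L \<noteq> []\<close>
          by (intro exI[of _ "[L]"]) (simp add: P_def)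
      qed
    qed
    then have "reduce_det f (P [a,b,c]) = reducel f [a,b,c]"
      using R unfolding reduce_deterministic_def by blast
    then have "f (f b c) a = f (f a b) c" by (simp add: P_def reduce_det_def)
    then show ?thesis using comm[of "f b c" a] by simp
  qed
  show "treeReduce_deterministic f"
    unfolding treeReduce_deterministic_def
  proof (intro allI impI)
    fix app :: "('a \<Rightarrow> 'a \<Rightarrow> 'a) \<Rightarrow> 'a list \<Rightarrow> 'a" and P :: "'a list \<Rightarrow> 'a list list" and L :: "'a list"
    assume ap: "is_apply app" and pp: "is_partitioning P" and L: "L \<noteq> []"
    have ne: "P L \<noteq> []" using pp L unfolding is_partitioning_def by fastforce
    have "combines f (map (reducel f) (P L)) (app f (map (reducel f) (P L)))"
      using ap ne unfolding is_apply_def by simp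
    then have "app f (map (reducel f) (P L)) = reduce_det f (P L)"
      unfolding reduce_det_def by (rule combines_eq[OF assoc])
    also have "\<dots> = reducel f L" using R pp L unfolding reduce_deterministic_def by blast
    finally show "treeReduce_bt app f (P L) = reducel f L" by (simp add: treeReduce_bt_def)
  qed
qed

end
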